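(* Consider the single-sensor system $x_{k+1}=Ax_k+w_k$, $y_k=Cx_k+v_k$ ($w_k,v_k$ independent zero-mean Gaussian with covariances $Q$, $R$), $(A,C)$ detectable, $(A,Q^{1/2})$ stabilizable, with local Kalman filter in steady state with filtered error covariance $\bar P$. Let $f(X)=AXA^T+Q$, $\mathcal{S}=\{f^n(\bar P):n\ge0\}$, $\lambda\in(0,1]$, $E\ge0$, $\beta\in(0,1)$. (i) (Finite horizon.) For $K\ge1$ define $J_{K+1}\equiv0$ and $J_k(P)=\min\{\beta\,\mathrm{tr}f(P)+J_{k+1}(f(P)),\ \beta[\lambda\mathrm{tr}\bar P+(1-\lambda)\mathrm{tr}f(P)]+(1-\beta)E+\lambda J_{k+1}(\bar P)+(1-\lambda)J_{k+1}(f(P))\}$ for $P\in\mathcal{S}$, and let the optimal decision $\nu_k^*(P)\in\{0,1\}$ be $0$ if the first term attains the minimum and $1$ if the second does. Then there exist thresholds $P^{th}_{k-1|k-1}$, $k=1,\dots,K$, such that $\nu_k^*=0$ if $P_{k-1|k-1}<P^{th}_{k-1|k-1}$ and $\nu_k^*=1$ if $P_{k-1|k-1}\ge P^{th}_{k-1|k-1}$, for $P_{k-1|k-1}\in\mathcal{S}$; the thresholds may be infinite (meaning $\nu_k^*=0$ for all $P_{k-1|k-1}\in\mathcal{S}$) when $A$ is stable. (ii) (Infinite horizon.) Let $(\rho,h)$ be the solution of the average-cost Bellman equation $\rho+h(P)=\min\{\beta\,\mathrm{tr}f(P)+h(f(P)),\ \beta[\lambda\mathrm{tr}\bar P+(1-\lambda)\mathrm{tr}f(P)]+(1-\beta)E+\lambda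 h(\bar P)+(1-\lambda)h(f(P))\}$ on $\mathcal{S}$ obtained as the limit of relative value iteration, and let $\nu^*(P)$ be $0$ or $1$ according to which term attains the minimum. Then the optimal policy is of the form $\nu_k^*=0$ if $P_{k-1|k-1}<P^{th}$ and $\nu_k^*=1$ if $P_{k-1|k-1}\ge P^{th}$, for some constant threshold $P^{th}$, which may be infinite when $A$ is stable.
   Context: For symmetric matrices, $X\le Y$ means $Y-X$ is positive semidefinite (by the paper's results $\mathcal{S}$ is totally ordered by this relation), and $X<Y$ means $X\le Y$, $X\ne Y$ within $\mathcal{S}$. $\nu_k=1$ means the sensor transmits its local state estimate at time $k$ over an i.i.d. channel with success probability $\lambda$, at cost $E$; the remote error covariance becomes $\bar P$ on successful reception and $f(P_{k-1|k-1})$ otherwise. A matrix is stable if all eigenvalues have modulus less than one. *)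

theory Defs
  imports "HOL-Analysis.Analysis"
begin

type_synonym 'n rmat = "real^'n^'n"

definition psd :: "real^'n^'n \<Rightarrow> bool" where
  "psd M \<longleftrightarrow> transpose M = M \<and> (\<forall>x. 0 \<le> x \<bullet> (M *v x))"

definition posdef :: "real^'n^'n \<Rightarrow> bool" where
  "posdef M \<longleftrightarrow> transpose M = M \<and> (\<forall>x. x \<noteq> 0 \<longrightarrow> 0 < x \<bullet> (M *v x))"

definition loewner_le :: "real^'n^'n \<Rightarrow> real^'n^'n \<Rightarrow> bool" where
  "loewner_le X Y \<longleftrightarrow> psd (Y - X)"

definition loewner_less :: "real^'n^'n \<Rightarrow> real^'n^'n \<Rightarrow> bool" where
  "loewner_less X Y \<longleftrightarrow> loewner_le X Y \<and> X \<noteq> Y"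

definition eigenvalue :: "real^'n^'n \<Rightarrow> complex \<Rightarrow> bool" where
  "eigenvalue A z \<longleftrightarrow> det (mat z - map_matrix complex_of_real A) = 0"

definition stable :: "real^'n^'n \<Rightarrow> bool" where
  "stable A \<longleftrightarrow> (\<forall>z. eigenvalue A z \<longrightarrow> cmod z < 1)"

definition detectable :: "real^'n^'n \<Rightarrow> real^'n^'m \<Rightarrow> bool" where
  "detectable A C \<longleftrightarrow> (\<exists>L :: real^'m^'n. stable (A + L ** C))"

definition stabilizable :: "real^'n^'n \<Rightarrow> real^'p^'n \<Rightarrow> bool" where
  "stabilizable A B \<longleftrightarrow> (\<exists>K :: real^'n^'p. stable (A + B ** K))"

definition fmap :: "real^'n^'n \<Rightarrow> real^'n^'n \<Rightarrow> real^'n^'n \<Rightarrow> real^'n^'n" where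
  "fmap A Q X = A ** X ** transpose A + Q"

definition Sset :: "real^'n^'n \<Rightarrow> real^'n^'n \<Rightarrow> real^'n^'n \<Rightarrow> (real^'n^'n) set" where
  "Sset A Q Pbar = range (\<lambda>n. (fmap A Q ^^ n) Pbar)"

definition cost0 :: "real^'n^'n \<Rightarrow> real^'n^'n \<Rightarrow> real \<Rightarrow> real^'n^'n \<Rightarrow> real" where
  "cost0 A Q \<beta> P = \<beta> * trace (fmap A Q P)"

definition cost1 :: "real^'n^'n \<Rightarrow> real^'n^'n \<Rightarrow> real^'n^'n \<Rightarrow> real \<Rightarrow> real \<Rightarrow> real
    \<Rightarrow> real^'n^'n \<Rightarrow> real" where
  "cost1 A Q Pbar lam E \<beta> P =
     \<beta> * (lam * trace Pbar + (1 - lam) * trace (fmap A Q P)) + (1 - \<beta>) * E"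

definition qval0 :: "real^'n^'n \<Rightarrow> real^'n^'n \<Rightarrow> real \<Rightarrow> (real^'n^'n \<Rightarrow> real)
    \<Rightarrow> real^'n^'n \<Rightarrow> real" where
  "qval0 A Q \<beta> h P = cost0 A Q \<beta> P + h (fmap A Q P)"

definition qval1 :: "real^'n^'n \<Rightarrow> real^'n^'n \<Rightarrow> real^'n^'n \<Rightarrow> real \<Rightarrow> real \<Rightarrow> real
    \<Rightarrow> (real^'n^'n \<Rightarrow> real) \<Rightarrow> real^'n^'n \<Rightarrow> real" where
  "qval1 A Q Pbar lam E \<beta> h P =
     cost1 A Q Pbar lam E \<beta> P + lam * h Pbar + (1 - lam) * h (fmap A Q P)"

definition bellman :: "real^'n^'n \<Rightarrow> real^'n^'n \<Rightarrow> real^'n^'n \<Rightarrow> real \<Rightarrow> real \<Rightarrow> real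
    \<Rightarrow> (real^'n^'n \<Rightarrow> real) \<Rightarrow> real^'n^'n \<Rightarrow> real" where
  "bellman A Q Pbar lam E \<beta> h P =
     min (qval0 A Q \<beta> h P) (qval1 A Q Pbar lam E \<beta> h P)"

(* decision attaining the minimum (ties broken in favour of nu = 0) *)
definition decision :: "real^'n^'n \<Rightarrow> real^'n^'n \<Rightarrow> real^'n^'n \<Rightarrow> real \<Rightarrow> real \<Rightarrow> real
    \<Rightarrow> (real^'n^'n \<Rightarrow> real) \<Rightarrow> real^'n^'n \<Rightarrow> nat" where
  "decision A Q Pbar lam E \<beta> h P =
     (if qval0 A Q \<beta> h P \<le> qval1 A Q Pbar lam E \<beta> h P then 0 else 1)"

fun Vrem :: "real^'n^'n \<Rightarrow> real^'n^'n \<Rightarrow> real^'n^'n \<Rightarrow> real \<Rightarrow> real \<Rightarrow> real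
    \<Rightarrow> nat \<Rightarrow> real^'n^'n \<Rightarrow> real" where
  "Vrem A Q Pbar lam E \<beta> 0 = (\<lambda>P. 0)"
| "Vrem A Q Pbar lam E \<beta> (Suc m) = bellman A Q Pbar lam E \<beta> (Vrem A Q Pbar lam E \<beta> m)"

(* finite horizon value J_k for horizon K (k = 1..K+1); J_{K+1} = 0 *)
definition Jfin :: "real^'n^'n \<Rightarrow> real^'n^'n \<Rightarrow> real^'n^'n \<Rightarrow> real \<Rightarrow> real \<Rightarrow> real
    \<Rightarrow> nat \<Rightarrow> nat \<Rightarrow> real^'n^'n \<Rightarrow> real" where
  "Jfin A Q Pbar lam E \<beta> K k = Vrem A Q Pbar lam E \<beta> (K + 1 - k)"

definition nu_fin :: "real^'n^'n \<Rightarrow> real^'n^'n \<Rightarrow> real^'n^'n \<Rightarrow> real \<Rightarrow> real \<Rightarrow> real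
    \<Rightarrow> nat \<Rightarrow> nat \<Rightarrow> real^'n^'n \<Rightarrow> nat" where
  "nu_fin A Q Pbar lam E \<beta> K k =
     decision A Q Pbar lam E \<beta> (Jfin A Q Pbar lam E \<beta> K (k + 1))"

fun rvi :: "real^'n^'n \<Rightarrow> real^'n^'n \<Rightarrow> real^'n^'n \<Rightarrow> real \<Rightarrow> real \<Rightarrow> real
    \<Rightarrow> nat \<Rightarrow> real^'n^'n \<Rightarrow> real" where
  "rvi A Q Pbar lam E \<beta> 0 = (\<lambda>P. 0)"
| "rvi A Q Pbar lam E \<beta> (Suc n) =
     (\<lambda>P. bellman A Q Pbar lam E \<beta> (rvi A Q Pbar lam E \<beta> n) P
          - bellman A Q Pbar lam E \<beta> (rvi A Q Pbar lam E \<beta> n) Pbar)"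

end

theory Submission
  imports Defs
begin


lemma transpose_add: "transpose ((M::'a::semiring_1^'n^'m) + N) = transpose M + transpose N"
  by (simp add: transpose_def vec_eq_iff)
lemma transpose_diff: "transpose ((M::'a::ring_1^'n^'m) - N) = transpose M - transpose N"
  by (simp add: transpose_def vec_eq_iff)
lemma transpose_zero: "transpose (0::'a::semiring_1^'n^'m) = 0"
  by (simp add: transpose_def vec_eq_iff)
lemma transpose_uminus: "transpose (- (M::'a::ring_1^'n^'m)) = - transpose M"
  by (simp add: transpose_def vec_eq_iff)
lemma mm_diff_ldistrib: "(A::'a::ring_1^'n^'m) ** (B - C) = A ** B - A ** C"
  by (simp add: matrix_matrix_mult_def vec_eq_iff sum_subtractf algebra_simps)
lemma mm_diff_rdistrib: "((B::'a::ring_1^'n^'m) - C) ** A = B ** A - C ** A"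
  by (simp add: matrix_matrix_mult_def vec_eq_iff sum_subtractf algebra_simps)
lemma mm_add_rdistrib: "((B::'a::ring_1^'n^'m) + C) ** A = B ** A + C ** A"
  by (simp add: matrix_matrix_mult_def vec_eq_iff sum.distrib algebra_simps)

lemma inner_mv_transpose: "(x::real^'n) \<bullet> (M *v y) = (transpose M *v x) \<bullet> y"
  by (simp add: dot_lmul_matrix)

lemma psd_congr:
  fixes M :: "real^'k^'k" and B :: "real^'k^'n"
  assumes "psd M" shows "psd (B ** M ** transpose B)"
proof -
  have s: "transpose M = M" using assms by (simp add: psd_def)
  have "transpose (B ** M ** transpose B) = B ** M ** transpose B"
    by (simp add: matrix_transpose_mul s matrix_mul_assoc)
  moreover have "0 \<le> x \<bullet> ((B ** M ** transpose B) *v x)" for x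
  proof -
    have "x \<bullet> ((B ** M ** transpose B) *v x) = (transpose B *v x) \<bullet> (M *v (transpose B *v x))"
      by (metis inner_mv_transpose matrix_vector_mul_assoc inner_commute)
    also have "\<dots> \<ge> 0" using assms by (simp add: psd_def)
    finally show ?thesis by simp
  qed
  ultimately show ?thesis by (simp add: psd_def)
qed

lemma psd_add: "psd M \<Longrightarrow> psd N \<Longrightarrow> psd (M + N)"
  by (simp add: psd_def matrix_vector_mult_add_rdistrib inner_add_right transpose_add)

lemma psd_0: "psd (0::real^'n^'n)"
  by (simp add: psd_def transpose_zero)

lemma entry_axis: "axis i 1 \<bullet> ((M::real^'n^'n) *v axis j 1) = M$i$j"
  by (simp add: matrix_vector_mult_def inner_axis axis_def inner_vec_def if_distrib if_distribR sum.delta cong: if_cong)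

lemma psd_diag: "psd M \<Longrightarrow> 0 \<le> M$i$i"
  by (metis entry_axis psd_def)

lemma psd_trace: "psd M \<Longrightarrow> 0 \<le> trace M"
  by (simp add: trace_def psd_diag sum_nonneg)

lemma psd_antisym: assumes "psd M" "psd (-M)" shows "M = 0"
proof -
  have s: "transpose M = M" using assms by (simp add: psd_def)
  have q: "x \<bullet> (M *v x) = 0" for x
  proof -
    have "0 \<le> x \<bullet> (M *v x)" using assms by (simp add: psd_def)
    moreover have "0 \<le> x \<bullet> ((-M) *v x)" using assms(2) unfolding psd_def by blast
    moreover have "(-M) *v x = - (M *v x)"
      by (simp add: matrix_vector_mult_def vec_eq_iff sum_negf)
    ultimately show ?thesis by simp
  qed
  have "M *v y = 0" for y
  proof -
    have "x \<bullet> (M *v y) = 0" for x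
    proof -
      have "(x+y) \<bullet> (M *v (x+y)) = x \<bullet> (M *v x) + y \<bullet> (M *v y) + x \<bullet> (M *v y) + y \<bullet> (M *v x)"
        by (simp add: matrix_vector_right_distrib inner_add_left inner_add_right)
      moreover have "y \<bullet> (M *v x) = x \<bullet> (M *v y)"
        by (metis inner_mv_transpose inner_commute s)
      ultimately show ?thesis using q[of x] q[of y] q[of "x+y"] by simp
    qed
    from this[of "M *v y"] show ?thesis by simp
  qed
  then show ?thesis by (metis matrix_eq matrix_vector_mult_0)
qed

lemma psd_entry_bound: assumes "psd M" shows "\<bar>M$i$j\<bar> \<le> 2 * trace M"
proof -
  have s: "M$j$i = M$i$j" using assms unfolding psd_def by (metis transpose_def vec_lambda_beta)
  have e: "(axis i 1 + s *\<^sub>R axis j 1) \<bullet> (M *v (axis i 1 + s *\<^sub>R axis j 1))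
      = M$i$i + s * M$i$j + s * M$j$i + s * s * M$j$j" for s
    by (simp add: matrix_vector_right_distrib matrix_vector_mult_scaleR inner_add_left inner_add_right entry_axis algebra_simps)
  have p: "0 \<le> M$i$i + s * M$i$j + s * M$j$i + s * s * M$j$j" for s
    using assms e[of s] unfolding psd_def by metis
  have "M$i$i + M$j$j \<le> 2 * trace M"
  proof -
    have "M$i$i \<le> trace M" "M$j$j \<le> trace M"
      unfolding trace_def using psd_diag[OF assms]
      by (auto intro!: member_le_sum)
    then show ?thesis by simp
  qed
  with p[of 1] p[of "-1"] s show ?thesis by (simp add: abs_le_iff)
qed



lemma quad_bound: assumes "psd (M::real^'n^'n)"
  shows "x \<bullet> (M *v x) \<le> 2 * trace M * (\<Sum>i\<in>UNIV. \<bar>x$i\<bar>)^2"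
proof -
  have "x \<bullet> (M *v x) = (\<Sum>i\<in>UNIV. \<Sum>j\<in>UNIV. x$i * M$i$j * x$j)"
    by (simp add: inner_vec_def matrix_vector_mult_def sum_distrib_left mult.assoc)
  also have "\<dots> \<le> (\<Sum>i\<in>UNIV. \<Sum>j\<in>UNIV. \<bar>x$i\<bar> * (2 * trace M) * \<bar>x$j\<bar>)"
  proof (intro sum_mono)
    fix i j
    have "x$i * M$i$j * x$j \<le> \<bar>x$i * M$i$j * x$j\<bar>" by simp
    also have "\<dots> = \<bar>x$i\<bar> * \<bar>M$i$j\<bar> * \<bar>x$j\<bar>" by (simp add: abs_mult)
    also have "\<dots> \<le> \<bar>x$i\<bar> * (2 * trace M) * \<bar>x$j\<bar>"
      using psd_entry_bound[OF assms, of i j] by (simp add: mult_mono mult_right_mono)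
    finally show "x$i * M$i$j * x$j \<le> \<bar>x$i\<bar> * (2 * trace M) * \<bar>x$j\<bar>" .
  qed
  also have "\<dots> = 2 * trace M * (\<Sum>i\<in>UNIV. \<bar>x$i\<bar>)^2"
    by (simp add: power2_eq_square sum_distrib_left sum_distrib_right mult_ac)
  finally show ?thesis .
qed

lemma mat_mv: "mat z *v (v::'a::comm_ring_1^'n) = z *s v"
  by (simp add: mat_def matrix_vector_mult_def vec_eq_iff if_distrib if_distribR sum.delta cong: if_cong)

lemma eig_vec:
  assumes "eigenvalue A z"
  shows "\<exists>v::complex^'n. v \<noteq> 0 \<and> v v* map_matrix complex_of_real A = z *s v"
proof -
  let ?M = "transpose (mat z - map_matrix complex_of_real (A::real^'n^'n))"
  have "det ?M = 0" using assms by (simp add: eigenvalue_def)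
  hence "\<not> inj ((*v) ?M)"
    using det_nz_iff_inj_gen[OF matrix_vector_mul_linear_gen, of ?M] by simp
  then obtain x y where "x \<noteq> y" "?M *v x = ?M *v y" unfolding inj_def by blast
  hence "?M *v (x - y) = 0" "x - y \<noteq> 0"
    by (auto simp: matrix_vector_mult_diff_distrib)
  moreover have "?M *v w = z *s w - w v* map_matrix complex_of_real A" for w
    by (simp add: transpose_diff matrix_vector_mult_diff_rdistrib mat_mv)
  ultimately show ?thesis by (metis eq_iff_diff_eq_0)
qed

lemma vec_eig:
  assumes "(v::complex^'n) \<noteq> 0" "v v* map_matrix complex_of_real A = z *s v"
  shows "eigenvalue A z"
proof -
  let ?M = "transpose (mat z - map_matrix complex_of_real (A::real^'n^'n))"
  have "?M *v w = z *s w - w v* map_matrix complex_of_real A" for w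
    by (simp add: transpose_diff matrix_vector_mult_diff_rdistrib mat_mv)
  hence "?M *v v = ?M *v 0" using assms by simp
  hence "\<not> inj ((*v) ?M)" using assms(1) unfolding inj_def by blast
  hence "det ?M = 0"
    using det_nz_iff_inj_gen[OF matrix_vector_mul_linear_gen, of ?M] by simp
  thus ?thesis by (simp add: eigenvalue_def)
qed

definition re_v :: "complex^'n \<Rightarrow> real^'n" where "re_v v = (\<chi> i. Re (v$i))"
definition im_v :: "complex^'n \<Rightarrow> real^'n" where "im_v v = (\<chi> i. Im (v$i))"

lemma eig_real:
  "v v* map_matrix complex_of_real A = z *s v \<longleftrightarrow>
   (re_v v v* A = Re z *\<^sub>R re_v v - Im z *\<^sub>R im_v v \<and>
    im_v v v* A = Im z *\<^sub>R re_v v + Re z *\<^sub>R im_v v)"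
  by (auto simp: vec_eq_iff complex_eq_iff vector_matrix_mult_def re_v_def im_v_def)

lemma quad_congr:
  fixes A M :: "real^'n^'n"
  assumes "a v* A = x *\<^sub>R a - y *\<^sub>R b" "b v* A = y *\<^sub>R a + x *\<^sub>R b"
  shows "a \<bullet> ((A ** M ** transpose A) *v a) + b \<bullet> ((A ** M ** transpose A) *v b)
       = (x^2 + y^2) * (a \<bullet> (M *v a) + b \<bullet> (M *v b))"
proof -
  have e: "c \<bullet> ((A ** M ** transpose A) *v c) = (c v* A) \<bullet> (M *v (c v* A))" for c
  proof -
    have "c \<bullet> ((A ** M ** transpose A) *v c) = c \<bullet> (A *v (M *v (transpose A *v c)))"
      by (simp only: matrix_vector_mul_assoc matrix_mul_assoc)
    also have "\<dots> = (transpose A *v c) \<bullet> (M *v (transpose A *v c))"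
      by (rule inner_mv_transpose)
    finally show ?thesis by simp
  qed
  have l: "M *v (x *\<^sub>R a - y *\<^sub>R b) = x *\<^sub>R (M *v a) - y *\<^sub>R (M *v b)"
          "M *v (y *\<^sub>R a + x *\<^sub>R b) = y *\<^sub>R (M *v a) + x *\<^sub>R (M *v b)"
    by (simp_all add: matrix_vector_mult_diff_distrib matrix_vector_right_distrib matrix_vector_mult_scaleR)
  show ?thesis unfolding e assms l
    by (simp add: inner_diff_left inner_diff_right inner_add_left inner_add_right power2_eq_square algebra_simps)
qed


lemma qh_zero:
  fixes Qh :: "real^'n^'n"
  assumes sQh: "transpose Qh = Qh" and le: "a \<bullet> ((Qh ** Qh) *v a) + b \<bullet> ((Qh ** Qh) *v b) \<le> 0"
  shows "a v* Qh = 0 \<and> b v* Qh = 0"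
proof -
  have e: "c \<bullet> ((Qh ** Qh) *v c) = (Qh *v c) \<bullet> (Qh *v c)" for c
  proof -
    have "c \<bullet> ((Qh ** Qh) *v c) = c \<bullet> (Qh *v (Qh *v c))" by (simp only: matrix_vector_mul_assoc)
    also have "\<dots> = (transpose Qh *v c) \<bullet> (Qh *v c)" by (rule inner_mv_transpose)
    finally show ?thesis using sQh by simp
  qed
  have "(Qh *v a) \<bullet> (Qh *v a) = 0 \<and> (Qh *v b) \<bullet> (Qh *v b) = 0"
    using le unfolding e by (smt (verit) inner_ge_zero)
  hence "Qh *v a = 0 \<and> Qh *v b = 0" by simp
  moreover have "a v* Qh = transpose Qh *v a" "b v* Qh = transpose Qh *v b" by simp_all
  ultimately show ?thesis using sQh by simp
qed

lemma stable_of_bounded: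
  fixes A Q Qh :: "real^'n^'n" and P :: "nat \<Rightarrow> real^'n^'n"
  assumes Qh: "psd Qh" "Qh ** Qh = Q" and stab: "stabilizable A Qh"
    and Ppsd: "\<And>n. psd (P (Suc n))"
    and Prec: "\<And>n. P (Suc (Suc n)) = A ** P (Suc n) ** transpose A + Q"
    and bnd: "\<And>n. trace (P n) \<le> B"
  shows "stable A"
proof (rule ccontr)
  assume "\<not> stable A"
  then obtain z where ez: "eigenvalue A z" and z1: "1 \<le> cmod z"
    unfolding stable_def by (auto simp: not_less)
  obtain v where v0: "v \<noteq> 0" and vA: "v v* map_matrix complex_of_real A = z *s v"
    using eig_vec[OF ez] by blast
  define a where "a = re_v v"
  define b where "b = im_v v"
  have ra: "a v* A = Re z *\<^sub>R a - Im z *\<^sub>R b" and rb: "b v* A = Im z *\<^sub>R a + Re z *\<^sub>R b"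
    using vA unfolding eig_real a_def b_def by auto
  define q where "q M = a \<bullet> (M *v a) + b \<bullet> (M *v b)" for M :: "real^'n^'n"
  have zz: "(Re z)^2 + (Im z)^2 = (cmod z)^2" by (simp add: cmod_power2)
  have z2: "1 \<le> (Re z)^2 + (Im z)^2" unfolding zz using z1
    by (simp add: one_le_power)
  have qA: "q (A ** M ** transpose A) = ((Re z)^2 + (Im z)^2) * q M" for M
    unfolding q_def by (rule quad_congr[OF ra rb])
  have qadd: "q (M + N) = q M + q N" for M N
    unfolding q_def by (simp add: matrix_vector_mult_add_rdistrib inner_add_right)
  have qpsd: "psd M \<Longrightarrow> 0 \<le> q M" for M unfolding q_def psd_def by (simp add: add_nonneg_nonneg)
  have sQh: "transpose Qh = Qh" using Qh by (simp add: psd_def)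
  have qQ: "0 < q Q"
  proof (rule ccontr)
    assume "\<not> 0 < q Q"
    hence "a v* Qh = 0 \<and> b v* Qh = 0"
      using qh_zero[OF sQh, of a b] unfolding q_def Qh(2) by simp
    hence qa: "a v* Qh = 0" "b v* Qh = 0" by auto
    obtain K where sK: "stable (A + Qh ** K)" using stab unfolding stabilizable_def by blast
    have "a v* (A + Qh ** K) = a v* A" "b v* (A + Qh ** K) = b v* A"
      by (simp_all add: vector_matrix_mult_add_rdistrib vector_matrix_mul_assoc[symmetric] qa)
    hence "v v* map_matrix complex_of_real (A + Qh ** K) = z *s v"
      using ra rb unfolding eig_real a_def b_def by simp
    hence "eigenvalue (A + Qh ** K) z" using vec_eig v0 by blast
    with sK z1 show False unfolding stable_def by force
  qed
  have grow: "q (P 1) + real n * q Q \<le> q (P (Suc n))" for n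
  proof (induction n)
    case 0 then show ?case by simp
  next
    case (Suc n)
    have "q (P (Suc (Suc n))) = ((Re z)^2 + (Im z)^2) * q (P (Suc n)) + q Q"
      by (simp only: Prec qadd qA)
    moreover have "q (P (Suc n)) \<le> ((Re z)^2 + (Im z)^2) * q (P (Suc n))"
      using z2 qpsd[OF Ppsd[of n]] by (simp add: mult_le_cancel_right1)
    ultimately show ?case using Suc by (simp add: algebra_simps)
  qed
  define Sa where "Sa = (\<Sum>i\<in>UNIV. \<bar>a$i\<bar>)"
  define Sb where "Sb = (\<Sum>i\<in>UNIV. \<bar>b$i\<bar>)"
  have ub: "q (P (Suc n)) \<le> 2 * B * (Sa^2 + Sb^2)" for n
  proof -
    have "q (P (Suc n)) \<le> 2 * trace (P (Suc n)) * Sa^2 + 2 * trace (P (Suc n)) * Sb^2"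
      unfolding q_def Sa_def Sb_def using quad_bound[OF Ppsd[of n]] by (meson add_mono)
    also have "\<dots> = 2 * trace (P (Suc n)) * (Sa^2 + Sb^2)" by (simp add: algebra_simps)
    also have "\<dots> \<le> 2 * B * (Sa^2 + Sb^2)"
      using bnd[of "Suc n"] by (simp add: mult_right_mono)
    finally show ?thesis .
  qed
  obtain n where n: "(2 * B * (Sa^2 + Sb^2) - q (P 1)) / q Q < real n"
    using reals_Archimedean2 by blast
  hence "2 * B * (Sa^2 + Sb^2) - q (P 1) < real n * q Q"
    using qQ by (simp add: divide_less_eq)
  with grow[of n] ub[of n] show False by simp
qed

lemma loewner_antisym: "loewner_le X Y \<Longrightarrow> loewner_le Y X \<Longrightarrow> X = (Y::real^'n^'n)"
proof -
  assume "loewner_le X Y" "loewner_le Y X"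
  hence "psd (Y - X)" "psd (- (Y - X))" by (simp_all add: loewner_le_def)
  hence "Y - X = 0" by (rule psd_antisym)
  thus ?thesis by simp
qed

lemma loewner_trans: "loewner_le X Y \<Longrightarrow> loewner_le Y Z \<Longrightarrow> loewner_le X (Z::real^'n^'n)"
proof -
  assume "loewner_le X Y" "loewner_le Y Z"
  hence "psd ((Z - Y) + (Y - X))" unfolding loewner_le_def by (rule psd_add[rotated])
  thus ?thesis by (simp add: loewner_le_def)
qed

lemma loewner_refl: "loewner_le X (X::real^'n^'n)"
  by (simp add: loewner_le_def psd_0)

lemma fmap_diff: "fmap A Q X - fmap A Q Y = A ** (X - Y) ** transpose A"
  by (simp add: fmap_def mm_diff_ldistrib mm_diff_rdistrib)

lemma psd_fmap: "psd Q \<Longrightarrow> psd X \<Longrightarrow> psd (fmap A Q X)"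
  unfolding fmap_def by (intro psd_add psd_congr)

lemma posdef_inv_psd:
  fixes S :: "real^'m^'m"
  assumes sym: "transpose S = S" and pd: "\<And>x. x \<noteq> 0 \<Longrightarrow> 0 < x \<bullet> (S *v x)"
  shows "psd (matrix_inv S)"
proof -
  have "inj ((*v) S)"
  proof (rule injI)
    fix x y assume "S *v x = S *v y"
    hence "S *v (x - y) = 0" by (simp add: matrix_vector_mult_diff_distrib)
    thus "x = y" using pd[of "x - y"] by force
  qed
  hence "invertible S" using matrix_left_invertible_injective invertible_left_inverse by blast
  hence "\<exists>A'. S ** A' = mat 1 \<and> A' ** S = mat 1" by (simp add: invertible_def)
  hence N: "S ** matrix_inv S = mat 1" "matrix_inv S ** S = mat 1"
    unfolding matrix_inv_def by (metis (mono_tags, lifting) someI_ex)+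
  let ?N = "matrix_inv S"
  have "transpose ?N ** S = mat 1"
    by (metis N(1) matrix_transpose_mul sym transpose_mat)
  hence tN: "transpose ?N = ?N"
    by (metis N(1) matrix_mul_assoc matrix_mul_lid matrix_mul_rid)
  have "0 \<le> y \<bullet> (?N *v y)" for y
  proof -
    let ?x = "?N *v y"
    have "S *v ?x = y" by (simp add: matrix_vector_mul_assoc N)
    hence "y \<bullet> ?x = ?x \<bullet> (S *v ?x)" by (simp add: inner_commute)
    moreover have "0 \<le> ?x \<bullet> (S *v ?x)" using pd[of ?x] by (cases "?x = 0") auto
    ultimately show ?thesis by simp
  qed
  with tN show ?thesis by (simp add: psd_def)
qed


lemma qdiff: "qval0 A Q \<beta> h P - qval1 A Q Pbar lam E \<beta> h P
   = lam * ((\<beta> * trace (fmap A Q P) + h (fmap A Q P)) - (\<beta> * trace Pbar + h Pbar)) - (1 - \<beta>) * E"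
  by (simp add: qval0_def qval1_def cost0_def cost1_def algebra_simps)

lemma bellman_mono:
  fixes P :: "nat \<Rightarrow> real^'n^'n"
  assumes Pn: "\<And>n. P (Suc n) = fmap A Q (P n)"
    and tr: "\<And>n. trace (P n) \<le> trace (P (Suc n))"
    and g: "\<And>n. g (P n) \<le> g (P (Suc n))"
    and lam: "0 \<le> lam" "lam \<le> 1" and beta: "0 \<le> \<beta>"
  shows "bellman A Q Pbar lam E \<beta> g (P n) \<le> bellman A Q Pbar lam E \<beta> g (P (Suc n))"
proof -
  have m: "\<beta> * trace (P (Suc n)) + g (P (Suc n)) \<le> \<beta> * trace (P (Suc (Suc n))) + g (P (Suc (Suc n)))"
    using tr[of "Suc n"] g[of "Suc n"] beta by (simp add: add_mono mult_left_mono)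
  have a: "qval0 A Q \<beta> g (P n) \<le> qval0 A Q \<beta> g (P (Suc n))"
    using m by (simp add: qval0_def cost0_def Pn[symmetric])
  have e: "qval1 A Q Pbar lam E \<beta> g X = \<beta> * lam * trace Pbar + (1-\<beta>) * E + lam * g Pbar
           + (1 - lam) * (\<beta> * trace (fmap A Q X) + g (fmap A Q X))" for X
    by (simp add: qval1_def cost1_def algebra_simps)
  have b: "qval1 A Q Pbar lam E \<beta> g (P n) \<le> qval1 A Q Pbar lam E \<beta> g (P (Suc n))"
    unfolding e Pn[symmetric] using m lam by (simp add: mult_left_mono)
  show ?thesis unfolding bellman_def using a b by (rule min.mono)
qed

lemma threshold_general:
  fixes P :: "nat \<Rightarrow> real^'n^'n" and h :: "real^'n^'n \<Rightarrow> real"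
  assumes Pn: "\<And>n. P (Suc n) = fmap A Q (P n)" and P0: "P 0 = Pbar"
    and S: "S = range P"
    and ch: "\<And>m n. m \<le> n \<Longrightarrow> loewner_le (P m) (P n)"
    and tr: "\<And>n. trace (P n) \<le> trace (P (Suc n))"
    and hm: "\<And>n. h (P n) \<le> h (P (Suc n))"
    and lam: "0 < lam" "lam \<le> 1" and beta: "0 < \<beta>"
    and stabc: "\<And>B. (\<And>n. trace (P n) \<le> B) \<Longrightarrow> stable A"
  shows "(\<exists>Pth\<in>S. \<forall>X\<in>S.
            (loewner_less X Pth \<longrightarrow> decision A Q Pbar lam E \<beta> h X = 0) \<and>
            (loewner_le Pth X \<longrightarrow> decision A Q Pbar lam E \<beta> h X = 1))
        \<or> (stable A \<and> (\<forall>X\<in>S. decision A Q Pbar lam E \<beta> h X = 0))"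
proof -
  define D where "D n = (decision A Q Pbar lam E \<beta> h (P n) = 1)" for n
  define G where "G n = \<beta> * trace (P (Suc n)) + h (P (Suc n))" for n
  define c where "c = \<beta> * trace Pbar + h Pbar"
  have Dc: "D n \<longleftrightarrow> (1 - \<beta>) * E < lam * (G n - c)" for n
    using qdiff[of A Q \<beta> h "P n" Pbar lam E]
    unfolding D_def decision_def G_def c_def Pn[symmetric] by auto
  have Gm: "G n \<le> G (Suc n)" for n
    unfolding G_def using tr[of "Suc n"] hm[of "Suc n"] beta by (simp add: add_mono)
  have Gmono: "m \<le> n \<Longrightarrow> G m \<le> G n" for m n
    using Gm by (rule lift_Suc_mono_le)
  have Dmono: "D m \<Longrightarrow> m \<le> n \<Longrightarrow> D n" for m n
  proof -
    assume "D m" "m \<le> n"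
    have "lam * (G m - c) \<le> lam * (G n - c)"
      using Gmono[OF \<open>m \<le> n\<close>] lam by (intro mult_left_mono) auto
    with \<open>D m\<close> show "D n" unfolding Dc by linarith
  qed
  have dec01: "decision A Q Pbar lam E \<beta> h X \<noteq> 1 \<Longrightarrow> decision A Q Pbar lam E \<beta> h X = 0" for X
    by (simp add: decision_def split: if_splits)
  show ?thesis
  proof (cases "\<exists>n. D n")
    case True
    define N where "N = (LEAST n. D n)"
    have DN: "D N" unfolding N_def using True by (metis LeastI)
    have lt: "m < N \<Longrightarrow> \<not> D m" for m unfolding N_def by (rule not_less_Least)
    have "\<forall>X\<in>S. (loewner_less X (P N) \<longrightarrow> decision A Q Pbar lam E \<beta> h X = 0) \<and>
            (loewner_le (P N) X \<longrightarrow> decision A Q Pbar lam E \<beta> h X = 1)"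
    proof
      fix X assume "X \<in> S"
      then obtain m where X: "X = P m" using S by blast
      show "(loewner_less X (P N) \<longrightarrow> decision A Q Pbar lam E \<beta> h X = 0) \<and>
            (loewner_le (P N) X \<longrightarrow> decision A Q Pbar lam E \<beta> h X = 1)"
      proof (intro conjI impI)
        assume a: "loewner_less X (P N)"
        show "decision A Q Pbar lam E \<beta> h X = 0"
        proof (cases "m < N")
          case True thus ?thesis using lt[of m] dec01[of X] unfolding X D_def by simp
        next
          case False
          hence "loewner_le (P N) (P m)" using ch by simp
          with a show ?thesis unfolding X loewner_less_def using loewner_antisym by blast
        qed
      next
        assume a: "loewner_le (P N) X"
        show "decision A Q Pbar lam E \<beta> h X = 1"
        proof (cases "N \<le> m")
          case True thus ?thesis using Dmono[OF DN True] unfolding X D_def by blast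
        next
          case False
          hence "loewner_le (P m) (P N)" using ch by simp
          with a have "P m = P N" unfolding X using loewner_antisym by blast
          thus ?thesis using DN unfolding X D_def by simp
        qed
      qed
    qed
    moreover have "P N \<in> S" using S by simp
    ultimately show ?thesis by blast
  next
    case False
    hence nD: "\<not> D n" for n by blast
    define B where "B = ((1 - \<beta>) * E / lam + c - h Pbar) / \<beta>"
    have b1: "trace (P (Suc n)) \<le> B" for n
    proof -
      have "lam * (G n - c) \<le> (1 - \<beta>) * E" using nD[of n] Dc by simp
      hence "G n - c \<le> (1 - \<beta>) * E / lam" using lam by (simp add: field_simps)
      moreover have "h Pbar \<le> h (P (Suc n))"
        using hm lift_Suc_mono_le[of "\<lambda>n. h (P n)" 0 "Suc n"] P0 by simp
      ultimately have "\<beta> * trace (P (Suc n)) \<le> (1 - \<beta>) * E / lam + c - h Pbar"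
        unfolding G_def by simp
      thus ?thesis unfolding B_def using beta by (simp add: field_simps)
    qed
    have "trace (P n) \<le> B" for n
    proof (cases n)
      case 0 thus ?thesis using tr[of 0] b1[of 0] by simp
    next
      case (Suc k) thus ?thesis using b1 by simp
    qed
    hence "stable A" by (rule stabc)
    moreover have "\<forall>X\<in>S. decision A Q Pbar lam E \<beta> h X = 0"
    proof
      fix X assume "X \<in> S"
      then obtain m where X: "X = P m" using S by blast
      show "decision A Q Pbar lam E \<beta> h X = 0" using nD[of m] dec01[of X] unfolding X D_def by simp
    qed
    ultimately show ?thesis by blast
  qed
qed


theorem theorem4:
  fixes A Q Qh Pp Pbar :: "real^'n^'n"
    and C :: "real^'n^'m" and R :: "real^'m^'m"
    and lam E \<beta> :: real
    and K :: nat
    and \<rho> :: real and h :: "real^'n^'n \<Rightarrow> real"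
  assumes Q_psd: "psd Q"
    and R_pd: "posdef R"
    and Qh: "psd Qh" "Qh ** Qh = Q"
    and det: "detectable A C"
    and stab: "stabilizable A Qh"
    and Pp_psd: "psd Pp"
    and DARE: "Pp = A ** Pp ** transpose A + Q
                 - A ** Pp ** transpose C ** matrix_inv (C ** Pp ** transpose C + R)
                     ** C ** Pp ** transpose A"
    and Pbar_def: "Pbar = Pp - Pp ** transpose C ** matrix_inv (C ** Pp ** transpose C + R)
                              ** C ** Pp"
    and lam: "0 < lam" "lam \<le> 1"
    and E: "0 \<le> E"
    and beta: "0 < \<beta>" "\<beta> < 1"
    and K: "1 \<le> K"
    and rvi_h: "\<forall>P\<in>Sset A Q Pbar. (\<lambda>n. rvi A Q Pbar lam E \<beta> n P) \<longlonglongrightarrow> h P"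
    and rvi_rho: "(\<lambda>n. bellman A Q Pbar lam E \<beta> (rvi A Q Pbar lam E \<beta> n) Pbar) \<longlonglongrightarrow> \<rho>"
    and bellman_eq: "\<forall>P\<in>Sset A Q Pbar. \<rho> + h P = bellman A Q Pbar lam E \<beta> h P"
  shows
    "(\<forall>k\<in>{1..K}.
        (\<exists>Pth\<in>Sset A Q Pbar. \<forall>P\<in>Sset A Q Pbar.
            (loewner_less P Pth \<longrightarrow> nu_fin A Q Pbar lam E \<beta> K k P = 0) \<and>
            (loewner_le Pth P \<longrightarrow> nu_fin A Q Pbar lam E \<beta> K k P = 1))
        \<or> (stable A \<and> (\<forall>P\<in>Sset A Q Pbar. nu_fin A Q Pbar lam E \<beta> K k P = 0)))
     \<and>
     ((\<exists>Pth\<in>Sset A Q Pbar. \<forall>P\<in>Sset A Q Pbar.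
            (loewner_less P Pth \<longrightarrow> decision A Q Pbar lam E \<beta> h P = 0) \<and>
            (loewner_le Pth P \<longrightarrow> decision A Q Pbar lam E \<beta> h P = 1))
        \<or> (stable A \<and> (\<forall>P\<in>Sset A Q Pbar. decision A Q Pbar lam E \<beta> h P = 0)))"
proof -
  define P where "P n = (fmap A Q ^^ n) Pbar" for n
  define N where "N = matrix_inv (C ** Pp ** transpose C + R)"
  define X where "X = Pp ** transpose C ** N ** C ** Pp"
  have Pn: "P (Suc n) = fmap A Q (P n)" for n by (simp add: P_def)
  have P0: "P 0 = Pbar" by (simp add: P_def)
  have S: "Sset A Q Pbar = range P" by (simp add: Sset_def P_def[abs_def])
  have Pb: "Pbar = Pp - X" unfolding X_def N_def by (rule Pbar_def)
  have sPp: "transpose Pp = Pp" using Pp_psd by (simp add: psd_def)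
  have sR: "transpose R = R" using R_pd by (simp add: posdef_def)
  have f1: "fmap A Q Pbar = Pp"
  proof -
    have "fmap A Q Pbar = A ** Pp ** transpose A + Q - A ** Pp ** transpose C ** N ** C ** Pp ** transpose A"
      unfolding fmap_def Pb X_def by (simp add: mm_diff_ldistrib mm_diff_rdistrib matrix_mul_assoc)
    also have "\<dots> = Pp" using DARE unfolding N_def by simp
    finally show ?thesis .
  qed
  have Npsd: "psd N" unfolding N_def
  proof (rule posdef_inv_psd)
    show "transpose (C ** Pp ** transpose C + R) = C ** Pp ** transpose C + R"
      by (simp add: transpose_add matrix_transpose_mul sPp sR matrix_mul_assoc)
  next
    fix x :: "real^'m" assume "x \<noteq> 0"
    have "0 \<le> x \<bullet> ((C ** Pp ** transpose C) *v x)"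
      using psd_congr[OF Pp_psd, of C] unfolding psd_def by blast
    moreover have "0 < x \<bullet> (R *v x)" using R_pd \<open>x \<noteq> 0\<close> by (simp add: posdef_def)
    ultimately show "0 < x \<bullet> ((C ** Pp ** transpose C + R) *v x)"
      by (simp add: matrix_vector_mult_add_rdistrib inner_add_right)
  qed
  have Xpsd: "psd X"
  proof -
    have "X = (Pp ** transpose C) ** N ** transpose (Pp ** transpose C)"
      unfolding X_def by (simp add: matrix_transpose_mul sPp matrix_mul_assoc)
    thus ?thesis using psd_congr[OF Npsd] by simp
  qed
  have Ppsd: "psd (P (Suc n))" for n
  proof (induction n)
    case 0 thus ?case using Pn[of 0] P0 f1 Pp_psd by simp
  next
    case (Suc n) thus ?case using Pn[of "Suc n"] psd_fmap[OF Q_psd] by simp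
  qed
  have stepP: "loewner_le (P n) (P (Suc n))" for n
  proof (induction n)
    case 0
    have "P 1 - P 0 = X" using Pn[of 0] P0 f1 Pb by simp
    thus ?case using Xpsd by (simp add: loewner_le_def)
  next
    case (Suc n)
    have "P (Suc (Suc n)) - P (Suc n) = A ** (P (Suc n) - P n) ** transpose A"
      using fmap_diff[of A Q "P (Suc n)" "P n"] by (simp only: Pn)
    thus ?case using Suc psd_congr by (simp add: loewner_le_def)
  qed
  have ch: "m \<le> n \<Longrightarrow> loewner_le (P m) (P n)" for m n
  proof (induction n rule: dec_induct)
    case base thus ?case by (rule loewner_refl)
  next
    case (step k) thus ?case using loewner_trans stepP by blast
  qed
  have tr: "trace (P n) \<le> trace (P (Suc n))" for n
    using psd_trace[of "P (Suc n) - P n"] stepP[of n] by (simp add: loewner_le_def trace_sub)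
  have stabc: "stable A" if "\<And>n. trace (P n) \<le> B" for B
  proof -
    have "P (Suc (Suc n)) = A ** P (Suc n) ** transpose A + Q" for n
      by (simp add: Pn[of "Suc n"] fmap_def)
    thus ?thesis using stable_of_bounded[of Qh Q A P B, OF Qh stab Ppsd] that by blast
  qed
  have lam': "0 \<le> lam" "lam \<le> 1" "0 \<le> \<beta>" using lam beta by auto
  have Vm: "Vrem A Q Pbar lam E \<beta> m (P n) \<le> Vrem A Q Pbar lam E \<beta> m (P (Suc n))" for m n
  proof (induction m arbitrary: n)
    case 0 thus ?case by simp
  next
    case (Suc m) thus ?case
      using bellman_mono[where P=P and g="Vrem A Q Pbar lam E \<beta> m", OF Pn tr Suc.IH lam'] by simp
  qed
  have Rm: "rvi A Q Pbar lam E \<beta> m (P n) \<le> rvi A Q Pbar lam E \<beta> m (P (Suc n))" for m n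
  proof (induction m arbitrary: n)
    case 0 thus ?case by simp
  next
    case (Suc m) thus ?case
      using bellman_mono[where P=P and g="rvi A Q Pbar lam E \<beta> m", OF Pn tr Suc.IH lam'] by simp
  qed
  have hm: "h (P n) \<le> h (P (Suc n))" for n
  proof (rule LIMSEQ_le)
    show "(\<lambda>m. rvi A Q Pbar lam E \<beta> m (P n)) \<longlonglongrightarrow> h (P n)" using rvi_h S by simp
    show "(\<lambda>m. rvi A Q Pbar lam E \<beta> m (P (Suc n))) \<longlonglongrightarrow> h (P (Suc n))" using rvi_h S by simp
    show "\<exists>N. \<forall>m\<ge>N. rvi A Q Pbar lam E \<beta> m (P n) \<le> rvi A Q Pbar lam E \<beta> m (P (Suc n))"
      using Rm by blast
  qed
  have part1: "\<forall>k\<in>{1..K}.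
        (\<exists>Pth\<in>Sset A Q Pbar. \<forall>P\<in>Sset A Q Pbar.
            (loewner_less P Pth \<longrightarrow> nu_fin A Q Pbar lam E \<beta> K k P = 0) \<and>
            (loewner_le Pth P \<longrightarrow> nu_fin A Q Pbar lam E \<beta> K k P = 1))
        \<or> (stable A \<and> (\<forall>P\<in>Sset A Q Pbar. nu_fin A Q Pbar lam E \<beta> K k P = 0))"
  proof
    fix k
    show "(\<exists>Pth\<in>Sset A Q Pbar. \<forall>P\<in>Sset A Q Pbar.
            (loewner_less P Pth \<longrightarrow> nu_fin A Q Pbar lam E \<beta> K k P = 0) \<and>
            (loewner_le Pth P \<longrightarrow> nu_fin A Q Pbar lam E \<beta> K k P = 1))
        \<or> (stable A \<and> (\<forall>P\<in>Sset A Q Pbar. nu_fin A Q Pbar lam E \<beta> K k P = 0))"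
      unfolding nu_fin_def Jfin_def
      by (rule threshold_general[where P=P and h="Vrem A Q Pbar lam E \<beta> (K + 1 - (k + 1))", OF Pn P0 S ch tr Vm lam beta(1) stabc])
  qed
  have part2: "(\<exists>Pth\<in>Sset A Q Pbar. \<forall>P\<in>Sset A Q Pbar.
            (loewner_less P Pth \<longrightarrow> decision A Q Pbar lam E \<beta> h P = 0) \<and>
            (loewner_le Pth P \<longrightarrow> decision A Q Pbar lam E \<beta> h P = 1))
        \<or> (stable A \<and> (\<forall>P\<in>Sset A Q Pbar. decision A Q Pbar lam E \<beta> h P = 0))"
    by (rule threshold_general[where P=P and h=h, OF Pn P0 S ch tr hm lam beta(1) stabc])
  from part1 part2 show ?thesis by blast
qed

end
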